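(* Let $T:\mathbb{R}^{M}\times\cdots\times\mathbb{R}^{M}\to\mathbb{R}^D$ ($N$ factors) be a real $N$-linear map with coefficients $T_{i,s}$, $i\in\{1,\dots,D\}$, $s\in\{1,\dots,M\}^N$, which is norm-preserving: $\big\|T(a^{(1)},\dots,a^{(N)})\big\|=\prod_{k=1}^N\|a^{(k)}\|$ for all $a^{(k)}\in\mathbb{R}^M$, where $T(a^{(1)},\dots,a^{(N)})_i=\sum_s T_{i,s}\prod_k a^{(k)}_{s_k}$ and $\|\cdot\|$ is the Euclidean norm. Let $\rho$ be a density operator on $\mathcal{H}_1\otimes\cdots\otimes\mathcal{H}_N$ which has positive partial transpose with respect to all bipartitions, i.e. $\rho^{T_\tau}\ge 0$ for every subset $\tau\subseteq\{1,\dots,N\}$. Then for all Hermitian operators $A^{(k)}_j$ on $\mathcal{H}_k$ ($k=1,\dots,N$, $j=1,\dots,M$), $$\sum_{i=1}^D\Big(\sum_{s}T_{i,s}\,\mathrm{tr}\big[\rho\,A^{(1)}_{s_1}\otimes\cdots\otimes A^{(N)}_{s_N}\big]\Big)^2\le\sum_{s}\mathrm{tr}\big[\rho\,(A^{(1)}_{s_1})^2\otimes\cdots\otimes(A^{(N)}_{s_N})^2\big].$$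
   Context: $\mathcal{H}_1,\dots,\mathcal{H}_N$ are finite-dimensional complex Hilbert spaces, each with a fixed orthonormal basis; for $\tau\subseteq\{1,\dots,N\}$, $\rho^{T_\tau}$ denotes the partial transpose of $\rho$ with respect to the tensor factors in $\tau$ (in these bases). A density operator is a positive semidefinite operator of trace one. *)

theory Defs
  imports Complex_Main "HOL-Library.FuncSet"
begin

text \<open>Multi-indices for the composite space H_1 x ... x H_N (0-based): functions
  x with x k < d k for k < N (extensional outside {..<N}).  Operators are matrices
  in the fixed product basis, i.e. functions of two basis indices.\<close>

definition mindex :: "nat \<Rightarrow> (nat \<Rightarrow> nat) \<Rightarrow> (nat \<Rightarrow> nat) set" where
  "mindex N d = PiE {..<N} (\<lambda>k. {..<d k})"

definition hermitian_on :: "'i set \<Rightarrow> ('i \<Rightarrow> 'i \<Rightarrow> complex) \<Rightarrow> bool" where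
  "hermitian_on I A \<longleftrightarrow> (\<forall>x\<in>I. \<forall>y\<in>I. A x y = cnj (A y x))"

definition psd_on :: "'i set \<Rightarrow> ('i \<Rightarrow> 'i \<Rightarrow> complex) \<Rightarrow> bool" where
  "psd_on I A \<longleftrightarrow> hermitian_on I A \<and>
     (\<forall>v. let q = (\<Sum>x\<in>I. \<Sum>y\<in>I. cnj (v x) * A x y * v y) in Im q = 0 \<and> Re q \<ge> 0)"

definition density_on :: "'i set \<Rightarrow> ('i \<Rightarrow> 'i \<Rightarrow> complex) \<Rightarrow> bool" where
  "density_on I \<rho> \<longleftrightarrow> psd_on I \<rho> \<and> (\<Sum>x\<in>I. \<rho> x x) = 1"

definition partial_transpose ::
  "nat set \<Rightarrow> ((nat \<Rightarrow> nat) \<Rightarrow> (nat \<Rightarrow> nat) \<Rightarrow> complex) \<Rightarrow> (nat \<Rightarrow> nat) \<Rightarrow> (nat \<Rightarrow> nat) \<Rightarrow> complex" where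
  "partial_transpose \<tau> \<rho> x y =
     \<rho> (\<lambda>k. if k \<in> \<tau> then y k else x k) (\<lambda>k. if k \<in> \<tau> then x k else y k)"

definition tensor_op :: "nat \<Rightarrow> (nat \<Rightarrow> nat \<Rightarrow> nat \<Rightarrow> complex) \<Rightarrow> (nat \<Rightarrow> nat) \<Rightarrow> (nat \<Rightarrow> nat) \<Rightarrow> complex" where
  "tensor_op N B x y = (\<Prod>k<N. B k (x k) (y k))"

definition mat_sq :: "nat \<Rightarrow> (nat \<Rightarrow> nat \<Rightarrow> complex) \<Rightarrow> nat \<Rightarrow> nat \<Rightarrow> complex" where
  "mat_sq n A a b = (\<Sum>c<n. A a c * A c b)"

definition trace_prod :: "'i set \<Rightarrow> ('i \<Rightarrow> 'i \<Rightarrow> complex) \<Rightarrow> ('i \<Rightarrow> 'i \<Rightarrow> complex) \<Rightarrow> complex" where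
  "trace_prod I \<rho> X = (\<Sum>x\<in>I. \<Sum>y\<in>I. \<rho> x y * X y x)"

definition multilin_apply :: "nat \<Rightarrow> nat \<Rightarrow> (nat \<Rightarrow> (nat \<Rightarrow> nat) \<Rightarrow> real) \<Rightarrow> (nat \<Rightarrow> nat \<Rightarrow> real) \<Rightarrow> nat \<Rightarrow> real" where
  "multilin_apply N M T a i = (\<Sum>s\<in>mindex N (\<lambda>_. M). T i s * (\<Prod>k<N. a k (s k)))"

definition norm_preserving :: "nat \<Rightarrow> nat \<Rightarrow> nat \<Rightarrow> (nat \<Rightarrow> (nat \<Rightarrow> nat) \<Rightarrow> real) \<Rightarrow> bool" where
  "norm_preserving N M D T \<longleftrightarrow>
     (\<forall>a :: nat \<Rightarrow> nat \<Rightarrow> real.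
        sqrt (\<Sum>i<D. (multilin_apply N M T a i)\<^sup>2) = (\<Prod>k<N. sqrt (\<Sum>j<M. (a k j)\<^sup>2)))"

end

theory Submission
  imports Defs
begin


definition Gm :: "nat \<Rightarrow> (nat \<Rightarrow> (nat\<Rightarrow>nat) \<Rightarrow> real) \<Rightarrow> (nat\<Rightarrow>nat) \<Rightarrow> (nat\<Rightarrow>nat) \<Rightarrow> real" where
 "Gm D T s t = (\<Sum>i<D. T i s * T i t)"

lemma finite_mindex[simp]: "finite (mindex N d)" unfolding mindex_def by (simp add: finite_PiE)

lemma sqrt_prod_nat: "(\<Prod>k<(N::nat). sqrt (f k)) = sqrt (\<Prod>k<N. f k)"
  by (induction N) (auto simp: real_sqrt_mult)

lemma diag:
  assumes "norm_preserving N M D T"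
  shows "(\<Sum>s\<in>mindex N (\<lambda>_. M). \<Sum>t\<in>mindex N (\<lambda>_. M). Gm D T s t * ((\<Prod>k<N. a k (s k)) * (\<Prod>k<N. a k (t k))))
         = (\<Prod>k<N. \<Sum>j<M. (a k j)^2)"
proof -
  let ?S = "mindex N (\<lambda>_. M)"
  let ?P = "\<lambda>s. \<Prod>k<N. a k (s k)"
  have "sqrt (\<Sum>i<D. (multilin_apply N M T a i)^2) = (\<Prod>k<N. sqrt (\<Sum>j<M. (a k j)^2))"
    using assms unfolding norm_preserving_def by blast
  also have "\<dots> = sqrt (\<Prod>k<N. \<Sum>j<M. (a k j)^2)" by (rule sqrt_prod_nat)
  finally have 1: "(\<Sum>i<D. (multilin_apply N M T a i)^2) = (\<Prod>k<N. \<Sum>j<M. (a k j)^2)"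
    by simp
  have "(\<Sum>i<D. (multilin_apply N M T a i)^2) = (\<Sum>i<D. \<Sum>s\<in>?S. \<Sum>t\<in>?S. (T i s * ?P s) * (T i t * ?P t))"
    unfolding multilin_apply_def power2_eq_square sum_product by simp
  also have "\<dots> = (\<Sum>s\<in>?S. \<Sum>t\<in>?S. \<Sum>i<D. (T i s * ?P s) * (T i t * ?P t))"
    by (simp add: sum.swap[of _ "{..<D}"])
  also have "\<dots> = (\<Sum>s\<in>?S. \<Sum>t\<in>?S. Gm D T s t * (?P s * ?P t))"
    unfolding Gm_def sum_distrib_right by (simp add: algebra_simps)
  finally show ?thesis using 1 by simp
qed



lemma prod_add_if:
  fixes f g :: "'a \<Rightarrow> 'c :: comm_semiring_1"
  assumes "finite K"
  shows "(\<Sum>X\<in>Pow K. \<Prod>k\<in>K. if k \<in> X then f k else g k) = (\<Prod>k\<in>K. f k + g k)"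
proof -
  have "(\<Prod>k\<in>K. if k \<in> X then f k else g k) = (\<Prod>k\<in>X. f k) * (\<Prod>k\<in>K - X. g k)" if "X \<in> Pow K" for X
  proof -
    have "K \<inter> {k. k \<in> X} = X" "K \<inter> - {k. k \<in> X} = K - X" using that by auto
    then show ?thesis using prod.If_cases[OF assms, of "\<lambda>k. k \<in> X" f g] by simp
  qed
  then show ?thesis using prod_add[OF assms, of f g] by simp
qed

lemma polar:
  assumes "norm_preserving N M D T"
  shows "(\<Sum>s\<in>mindex N (\<lambda>_. M). \<Sum>t\<in>mindex N (\<lambda>_. M). Gm D T s t *
            (\<Prod>k<N. x k (s k) * y k (t k) + y k (s k) * x k (t k)))
         = 2^N * (\<Prod>k<N. \<Sum>j<M. x k j * y k j)"
proof -
  let ?S = "mindex N (\<lambda>_. M)"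
  define p where "p k j = x k j + y k j" for k j
  define q where "q k j = x k j - y k j" for k j
  define r where "r X k j = (if k \<in> X then p k j else q k j)" for X :: "nat set" and k j
  define e where "e X k = (if k \<in> X then 1 else - 1 :: real)" for X :: "nat set" and k
  define c where "c X = (1/2::real)^N * (\<Prod>k<N. e X k)" for X
  have h1: "(\<Prod>k<N. x k (s k) * y k (t k) + y k (s k) * x k (t k)) =
      (\<Sum>X\<in>Pow {..<N}. c X * ((\<Prod>k<N. r X k (s k)) * (\<Prod>k<N. r X k (t k))))" for s t
  proof -
    have "(\<Prod>k<N. x k (s k) * y k (t k) + y k (s k) * x k (t k)) =
          (\<Prod>k<N. p k (s k) * p k (t k) / 2 + (- (q k (s k) * q k (t k)) / 2))"
      by (rule prod.cong) (auto simp: p_def q_def field_simps)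
    also have "\<dots> = (\<Sum>X\<in>Pow {..<N}. \<Prod>k<N. if k \<in> X then p k (s k) * p k (t k) / 2
                        else (- (q k (s k) * q k (t k)) / 2))"
      by (rule prod_add_if[symmetric]) simp
    also have "\<dots> = (\<Sum>X\<in>Pow {..<N}. \<Prod>k<N. (1/2) * (e X k * (r X k (s k) * r X k (t k))))"
      by (intro sum.cong prod.cong) (auto simp: e_def r_def)
    also have "\<dots> = (\<Sum>X\<in>Pow {..<N}. c X * ((\<Prod>k<N. r X k (s k)) * (\<Prod>k<N. r X k (t k))))"
      by (intro sum.cong refl) (simp add: prod.distrib c_def prod_constant del: times_divide_eq_right times_divide_eq_left)
    finally show ?thesis .
  qed
  have "(\<Sum>s\<in>?S. \<Sum>t\<in>?S. Gm D T s t * (\<Prod>k<N. x k (s k) * y k (t k) + y k (s k) * x k (t k)))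
      = (\<Sum>s\<in>?S. \<Sum>t\<in>?S. \<Sum>X\<in>Pow {..<N}. c X * (Gm D T s t * ((\<Prod>k<N. r X k (s k)) * (\<Prod>k<N. r X k (t k)))))"
    unfolding h1 sum_distrib_left by (simp add: algebra_simps)
  also have "\<dots> = (\<Sum>X\<in>Pow {..<N}. c X * (\<Sum>s\<in>?S. \<Sum>t\<in>?S. Gm D T s t * ((\<Prod>k<N. r X k (s k)) * (\<Prod>k<N. r X k (t k)))))"
    by (simp add: sum_distrib_left sum.swap[of _ "Pow {..<N}"])
  also have "\<dots> = (\<Sum>X\<in>Pow {..<N}. c X * (\<Prod>k<N. \<Sum>j<M. (r X k j)^2))"
    using diag[OF assms] by simp
  also have "\<dots> = (\<Sum>X\<in>Pow {..<N}. (1/2::real)^N * (\<Prod>k<N. if k \<in> X then (\<Sum>j<M. (p k j)^2) else - (\<Sum>j<M. (q k j)^2)))"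
    unfolding c_def mult.assoc prod.distrib[symmetric]
    by (intro sum.cong refl arg_cong2[where f="(*)"] prod.cong) (auto simp: e_def r_def)
  also have "\<dots> = (1/2::real)^N * (\<Prod>k<N. (\<Sum>j<M. (p k j)^2) + - (\<Sum>j<M. (q k j)^2))"
    by (simp add: sum_distrib_left[symmetric] prod_add_if)
  also have "\<dots> = (1/2::real)^N * (\<Prod>k<N. 4 * (\<Sum>j<M. x k j * y k j))"
    unfolding sum_negf[symmetric] sum.distrib[symmetric] sum_distrib_left
    by (intro arg_cong2[where f="(*)"] refl prod.cong sum.cong) (auto simp: p_def q_def power2_eq_square algebra_simps)
  also have "\<dots> = 2^N * (\<Prod>k<N. \<Sum>j<M. x k j * y k j)"
    by (simp add: prod.distrib power_mult_distrib[symmetric] flip: power_mult_distrib)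
  finally show ?thesis .
qed



definition dl :: "nat \<Rightarrow> nat \<Rightarrow> nat \<Rightarrow> nat \<Rightarrow> real" where
  "dl a b u v = of_bool (u = a \<and> v = b) + of_bool (u = b \<and> v = a)"

lemma dl_alt: "dl a b u v = of_bool (u = a) * of_bool (v = b) + of_bool (u = b) * of_bool (v = a)"
  by (simp add: dl_def of_bool_conj)

lemma mindex_eq_iff:
  assumes "p \<in> mindex N d" "q \<in> mindex N d"
  shows "(\<forall>k<N. p k = q k) \<longleftrightarrow> p = q"
proof
  assume h: "\<forall>k<N. p k = q k"
  show "p = q"
  proof
    fix x show "p x = q x"
      using h assms unfolding mindex_def by (cases "x < N") (auto simp: PiE_def extensional_def)
  qed
qed simp

lemma sum_ofbool_eq: "b < (M::nat) \<Longrightarrow> (\<Sum>j<M. of_bool (j = a) * of_bool (j = b) :: real) = of_bool (a = b)"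
proof -
  assume b: "b < M"
  have "(\<Sum>j<M. of_bool (j = a) * of_bool (j = b) :: real) = (\<Sum>j\<in>{b}. of_bool (j = a) * of_bool (j = b))"
    using b by (intro sum.mono_neutral_right) auto
  then show ?thesis by auto
qed

lemma keyH:
  assumes np: "norm_preserving N M D T" and p: "p \<in> mindex N (\<lambda>_. M)" and q: "q \<in> mindex N (\<lambda>_. M)"
  shows "(\<Sum>s\<in>mindex N (\<lambda>_. M). \<Sum>t\<in>mindex N (\<lambda>_. M). Gm D T s t *
            (\<Prod>k<N. dl (p k) (q k) (s k) (t k))) = 2^N * of_bool (p = q)"
proof -
  have qk: "q k < M" if "k < N" for k using q that unfolding mindex_def by auto
  have 3: "(\<Prod>k<N. of_bool (p k = q k) :: real) = of_bool (p = q)"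
  proof (cases "p = q")
    case True then show ?thesis by simp
  next
    case False
    then obtain k where "k < N" "p k \<noteq> q k" using mindex_eq_iff[OF p q] by blast
    then have "(\<Prod>k<N. of_bool (p k = q k) :: real) = 0" by (subst prod_zero_iff) auto
    then show ?thesis using False by simp
  qed
  have "(\<Sum>s\<in>mindex N (\<lambda>_. M). \<Sum>t\<in>mindex N (\<lambda>_. M). Gm D T s t *
            (\<Prod>k<N. dl (p k) (q k) (s k) (t k))) =
        2^N * (\<Prod>k<N. \<Sum>j<M. of_bool (j = p k) * of_bool (j = q k))"
    unfolding dl_alt by (rule polar[OF np, of "\<lambda>k j. of_bool (j = p k)" "\<lambda>k j. of_bool (j = q k)"])
  also have "\<dots> = 2^N * (\<Prod>k<N. of_bool (p k = q k))"
    using qk sum_ofbool_eq by (intro arg_cong2[where f="(*)"] refl prod.cong) auto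
  finally show ?thesis using 3 by simp
qed

lemma dsum:
  fixes f :: "nat \<Rightarrow> nat \<Rightarrow> 'a::comm_ring_1"
  assumes u: "u < M" and v: "v < M"
  shows "(\<Sum>a<M. \<Sum>b<M. f a b * (of_bool (a = u) * of_bool (b = v))) = f u v"
proof -
  have sv: "{..<M} \<inter> {v} = {v}" using v by auto
  have su: "{..<M} \<inter> {u} = {u}" using u by auto
  have "(\<Sum>b<M. f a b * (of_bool (a = u) * of_bool (b = v))) = of_bool (a = u) * f a v" for a
  proof -
    have "(\<Sum>b<M. f a b * (of_bool (a = u) * of_bool (b = v))) = of_bool (a = u) * (\<Sum>b<M. f a b * of_bool (b = v))"
      by (simp add: sum_distrib_left algebra_simps)
    also have "(\<Sum>b<M. f a b * of_bool (b = v)) = f a v" by (simp add: sv)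
    finally show ?thesis .
  qed
  then have "(\<Sum>a<M. \<Sum>b<M. f a b * (of_bool (a = u) * of_bool (b = v))) = (\<Sum>a<M. of_bool (a = u) * f a v)"
    by simp
  also have "\<dots> = f u v" by (simp add: su)
  finally show ?thesis .
qed

lemma of_real_dl: "(of_real (dl a b u v) :: complex) = of_bool (a = u) * of_bool (b = v) + of_bool (a = v) * of_bool (b = u)"
  by (auto simp: dl_def)

lemma keyK:
  fixes P :: "nat \<Rightarrow> nat \<Rightarrow> nat \<Rightarrow> complex"
  assumes np: "norm_preserving N M D T"
  shows "(\<Sum>s\<in>mindex N (\<lambda>_. M). \<Sum>t\<in>mindex N (\<lambda>_. M). of_real (Gm D T s t) *
            (\<Prod>k<N. P k (s k) (t k) + P k (t k) (s k)))
         = 2^N * (\<Sum>s\<in>mindex N (\<lambda>_. M). \<Prod>k<N. P k (s k) (s k))"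
proof -
  let ?S = "mindex N (\<lambda>_. M)"
  have e1: "P k u v + P k v u = (\<Sum>a<M. \<Sum>b<M. P k a b * of_real (dl a b u v))" if "u < M" "v < M" for k u v
  proof -
    have "(\<Sum>a<M. \<Sum>b<M. P k a b * of_real (dl a b u v)) =
       (\<Sum>a<M. \<Sum>b<M. P k a b * (of_bool (a = u) * of_bool (b = v))) +
       (\<Sum>a<M. \<Sum>b<M. P k a b * (of_bool (a = v) * of_bool (b = u)))"
      unfolding of_real_dl by (simp add: distrib_left sum.distrib)
    then show ?thesis using dsum[OF that, of "P k"] dsum[OF that(2,1), of "P k"] by simp
  qed
  have e2: "(\<Prod>k<N. P k (s k) (t k) + P k (t k) (s k)) =
      (\<Sum>p\<in>?S. \<Sum>q\<in>?S. (\<Prod>k<N. P k (p k) (q k)) * of_real (\<Prod>k<N. dl (p k) (q k) (s k) (t k)))"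
    if "s \<in> ?S" "t \<in> ?S" for s t
  proof -
    have "(\<Prod>k<N. P k (s k) (t k) + P k (t k) (s k)) =
          (\<Prod>k<N. \<Sum>a<M. \<Sum>b<M. P k a b * of_real (dl a b (s k) (t k)))"
      using that by (intro prod.cong refl e1) (auto simp: mindex_def)
    also have "\<dots> = (\<Sum>p\<in>?S. \<Prod>k<N. \<Sum>b<M. P k (p k) b * of_real (dl (p k) b (s k) (t k)))"
      unfolding mindex_def by (rule prod_sum_PiE) auto
    also have "\<dots> = (\<Sum>p\<in>?S. \<Sum>q\<in>?S. \<Prod>k<N. P k (p k) (q k) * of_real (dl (p k) (q k) (s k) (t k)))"
      unfolding mindex_def by (intro sum.cong refl prod_sum_PiE) auto
    finally show ?thesis by (simp add: prod.distrib)
  qed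
  let ?F = "\<lambda>s t p q. (\<Prod>k<N. P k (p k) (q k)) *
           of_real (Gm D T s t * (\<Prod>k<N. dl (p k) (q k) (s k) (t k)))"
  have "(\<Sum>s\<in>?S. \<Sum>t\<in>?S. of_real (Gm D T s t) * (\<Prod>k<N. P k (s k) (t k) + P k (t k) (s k)))
     = (\<Sum>s\<in>?S. \<Sum>t\<in>?S. \<Sum>p\<in>?S. \<Sum>q\<in>?S. ?F s t p q)"
    by (intro sum.cong refl) (simp add: e2 sum_distrib_left algebra_simps)
  also have "\<dots> = (\<Sum>s\<in>?S. \<Sum>p\<in>?S. \<Sum>t\<in>?S. \<Sum>q\<in>?S. ?F s t p q)"
    by (intro sum.cong refl sum.swap)
  also have "\<dots> = (\<Sum>p\<in>?S. \<Sum>s\<in>?S. \<Sum>t\<in>?S. \<Sum>q\<in>?S. ?F s t p q)"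
    by (rule sum.swap)
  also have "\<dots> = (\<Sum>p\<in>?S. \<Sum>s\<in>?S. \<Sum>q\<in>?S. \<Sum>t\<in>?S. ?F s t p q)"
    by (intro sum.cong refl sum.swap)
  also have "\<dots> = (\<Sum>p\<in>?S. \<Sum>q\<in>?S. \<Sum>s\<in>?S. \<Sum>t\<in>?S. ?F s t p q)"
    by (intro sum.cong refl sum.swap)
  also have "\<dots> = (\<Sum>p\<in>?S. \<Sum>q\<in>?S. (\<Prod>k<N. P k (p k) (q k)) *
           of_real (\<Sum>s\<in>?S. \<Sum>t\<in>?S. Gm D T s t * (\<Prod>k<N. dl (p k) (q k) (s k) (t k))))"
    by (simp add: sum_distrib_left of_real_sum)
  also have "\<dots> = (\<Sum>p\<in>?S. \<Sum>q\<in>?S. (\<Prod>k<N. P k (p k) (q k)) * of_real (2^N * of_bool (p = q)))"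
    by (intro sum.cong refl) (simp add: keyH[OF np])
  also have "\<dots> = (\<Sum>p\<in>?S. 2^N * (\<Prod>k<N. P k (p k) (p k)))"
  proof (intro sum.cong refl)
    fix p assume "p \<in> ?S"
    then have pp: "?S \<inter> {q. p = q} = {p}" by auto
    have "(\<Sum>q\<in>?S. (\<Prod>k<N. P k (p k) (q k)) * of_real (2^N * of_bool (p = q))) =
          (\<Sum>q\<in>?S. of_bool (p = q) * (2^N * (\<Prod>k<N. P k (p k) (q k))))"
      by (intro sum.cong refl) (cases "p = q"; simp)
    also have "\<dots> = 2^N * (\<Prod>k<N. P k (p k) (p k))"
      by (subst sum_of_bool_mult_eq, simp, subst pp, simp)
    finally show "(\<Sum>q\<in>?S. (\<Prod>k<N. P k (p k) (q k)) * of_real (2^N * of_bool (p = q))) = 2^N * (\<Prod>k<N. P k (p k) (p k))" .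
  qed
  also have "\<dots> = 2^N * (\<Sum>s\<in>mindex N (\<lambda>_. M). \<Prod>k<N. P k (s k) (s k))"
    by (simp add: sum_distrib_left)
  finally show ?thesis .
qed



definition mix :: "nat set \<Rightarrow> (nat \<Rightarrow> nat) \<Rightarrow> (nat \<Rightarrow> nat) \<Rightarrow> nat \<Rightarrow> nat" where
  "mix \<tau> x y = (\<lambda>k. if k \<in> \<tau> then y k else x k)"

lemma mix_mem: "x \<in> mindex N d \<Longrightarrow> y \<in> mindex N d \<Longrightarrow> mix \<tau> x y \<in> mindex N d"
  unfolding mindex_def mix_def by (auto simp: PiE_def extensional_def)

lemma mix_mix: "mix \<tau> (mix \<tau> x y) (mix \<tau> y x) = x"
  unfolding mix_def by auto

lemma pt_mix: "partial_transpose \<tau> \<rho> x y = \<rho> (mix \<tau> x y) (mix \<tau> y x)"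
  unfolding partial_transpose_def mix_def by simp

lemma trace_pt:
  "trace_prod (mindex N d) (partial_transpose \<tau> \<rho>) (tensor_op N B) =
   trace_prod (mindex N d) \<rho> (tensor_op N (\<lambda>k a b. if k \<in> \<tau> then B k b a else B k a b))"
proof -
  let ?X = "mindex N d"
  let ?B' = "\<lambda>k a b. if k \<in> \<tau> then B k b a else B k a b"
  have "trace_prod ?X (partial_transpose \<tau> \<rho>) (tensor_op N B) =
      (\<Sum>(x,y)\<in>?X \<times> ?X. \<rho> (mix \<tau> x y) (mix \<tau> y x) * tensor_op N B y x)"
    unfolding trace_prod_def pt_mix by (simp add: sum.cartesian_product)
  also have "\<dots> = (\<Sum>(x,y)\<in>?X \<times> ?X. \<rho> x y * tensor_op N ?B' y x)"
  proof (rule sum.reindex_bij_witness[where i="\<lambda>(x,y). (mix \<tau> x y, mix \<tau> y x)" and j="\<lambda>(x,y). (mix \<tau> x y, mix \<tau> y x)"])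
    fix a assume "a \<in> ?X \<times> ?X"
    then obtain x y where a: "a = (x,y)" "x \<in> ?X" "y \<in> ?X" by auto
    show "(case case a of (x, y) \<Rightarrow> (mix \<tau> x y, mix \<tau> y x) of (x, y) \<Rightarrow> (mix \<tau> x y, mix \<tau> y x)) = a"
      using a by (simp add: mix_mix)
    show "(case a of (x, y) \<Rightarrow> (mix \<tau> x y, mix \<tau> y x)) \<in> ?X \<times> ?X"
      using a by (simp add: mix_mem)
    show "(case case a of (x, y) \<Rightarrow> (mix \<tau> x y, mix \<tau> y x) of (x, y) \<Rightarrow> \<rho> x y * tensor_op N ?B' y x) =
          (case a of (x, y) \<Rightarrow> \<rho> (mix \<tau> x y) (mix \<tau> y x) * tensor_op N B y x)"
    proof -
      have "tensor_op N ?B' (mix \<tau> y x) (mix \<tau> x y) = tensor_op N B y x"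
        unfolding tensor_op_def mix_def by (rule prod.cong) auto
      then show ?thesis using a by simp
    qed
  next
    fix b assume "b \<in> ?X \<times> ?X"
    then obtain x y where a: "b = (x,y)" "x \<in> ?X" "y \<in> ?X" by auto
    show "(case case b of (x, y) \<Rightarrow> (mix \<tau> x y, mix \<tau> y x) of (x, y) \<Rightarrow> (mix \<tau> x y, mix \<tau> y x)) = b"
      using a by (simp add: mix_mix)
    show "(case b of (x, y) \<Rightarrow> (mix \<tau> x y, mix \<tau> y x)) \<in> ?X \<times> ?X"
      using a by (simp add: mix_mem)
  qed
  also have "\<dots> = trace_prod ?X \<rho> (tensor_op N ?B')"
    unfolding trace_prod_def by (simp add: sum.cartesian_product)
  finally show ?thesis .
qed

lemma trace_pt_diag: "(\<Sum>x\<in>mindex N d. partial_transpose \<tau> \<rho> x x) = (\<Sum>x\<in>mindex N d. \<rho> x x)"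
  by (simp add: pt_mix mix_def)



definition mm :: "'i set \<Rightarrow> ('i \<Rightarrow> 'i \<Rightarrow> complex) \<Rightarrow> ('i \<Rightarrow> 'i \<Rightarrow> complex) \<Rightarrow> 'i \<Rightarrow> 'i \<Rightarrow> complex" where
  "mm I P Q x y = (\<Sum>z\<in>I. P x z * Q z y)"

lemma sum_delta_l: "finite I \<Longrightarrow> y \<in> I \<Longrightarrow> (\<Sum>z\<in>I. of_bool (y = z) * f z) = (f y :: 'a::comm_ring_1)"
proof -
  assume "finite I" "y \<in> I"
  then have "I \<inter> {z. y = z} = {y}" by auto
  then show ?thesis using \<open>finite I\<close> by (subst sum_of_bool_mult_eq) simp_all
qed

lemma sum_delta_r: "finite I \<Longrightarrow> x \<in> I \<Longrightarrow> (\<Sum>z\<in>I. f z * of_bool (z = x)) = (f x :: 'a::comm_ring_1)"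
proof -
  assume "finite I" "x \<in> I"
  then have "I \<inter> {z. z = x} = {x}" by auto
  then show ?thesis using \<open>finite I\<close> by (subst sum_mult_of_bool_eq) simp_all
qed

lemma psd_sq:
  assumes psd: "psd_on I \<sigma>" and h: "hermitian_on I Z" and fin: "finite I"
  shows "Re (trace_prod I \<sigma> (mm I Z Z)) \<ge> 0"
proof -
  have "trace_prod I \<sigma> (mm I Z Z) = (\<Sum>x\<in>I. \<Sum>y\<in>I. \<Sum>c\<in>I. cnj (cnj (Z c x)) * \<sigma> x y * cnj (Z c y))"
    unfolding trace_prod_def mm_def sum_distrib_left
  proof (intro sum.cong refl)
    fix x y c assume "x \<in> I" "y \<in> I" "c \<in> I"
    then have "Z y c = cnj (Z c y)" using h unfolding hermitian_on_def by blast
    then show "\<sigma> x y * (Z y c * Z c x) = cnj (cnj (Z c x)) * \<sigma> x y * cnj (Z c y)" by simp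
  qed
  also have "\<dots> = (\<Sum>x\<in>I. \<Sum>c\<in>I. \<Sum>y\<in>I. cnj (cnj (Z c x)) * \<sigma> x y * cnj (Z c y))"
    by (intro sum.cong refl sum.swap)
  also have "\<dots> = (\<Sum>c\<in>I. \<Sum>x\<in>I. \<Sum>y\<in>I. cnj (cnj (Z c x)) * \<sigma> x y * cnj (Z c y))"
    by (rule sum.swap)
  finally have e: "Re (trace_prod I \<sigma> (mm I Z Z)) = (\<Sum>c\<in>I. Re (\<Sum>x\<in>I. \<Sum>y\<in>I. cnj (cnj (Z c x)) * \<sigma> x y * cnj (Z c y)))"
    by (simp add: Re_sum)
  have "Re (\<Sum>x\<in>I. \<Sum>y\<in>I. cnj (cnj (Z c x)) * \<sigma> x y * cnj (Z c y)) \<ge> 0" for c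
  proof -
    have "\<forall>v. 0 \<le> Re (\<Sum>x\<in>I. \<Sum>y\<in>I. cnj (v x) * \<sigma> x y * v y)"
      using psd unfolding psd_on_def Let_def by blast
    then show ?thesis by (rule allE[where x="\<lambda>x. cnj (Z c x)"]) simp
  qed
  then show ?thesis unfolding e by (simp add: sum_nonneg)
qed

lemma cs:
  assumes psd: "psd_on I \<sigma>" and tr: "(\<Sum>x\<in>I. \<sigma> x x) = 1" and h: "hermitian_on I Y" and fin: "finite I"
  shows "(Re (trace_prod I \<sigma> Y))\<^sup>2 \<le> Re (trace_prod I \<sigma> (mm I Y Y))"
proof -
  define l where "l = Re (trace_prod I \<sigma> Y)"
  define Z where "Z x y = Y x y - of_real l * of_bool (x = y)" for x y
  have hZ: "hermitian_on I Z" unfolding hermitian_on_def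
  proof (intro ballI)
    fix x y assume "x \<in> I" "y \<in> I"
    then have "Y x y = cnj (Y y x)" using h unfolding hermitian_on_def by blast
    then show "Z x y = cnj (Z y x)" unfolding Z_def by (cases "x = y") simp_all
  qed
  have mZ: "mm I Z Z y x = mm I Y Y y x - 2 * of_real l * Y y x + of_real (l^2) * of_bool (y = x)"
    if "x \<in> I" "y \<in> I" for x y
  proof -
    have "mm I Z Z y x = (\<Sum>z\<in>I. Y y z * Y z x) - of_real l * (\<Sum>z\<in>I. of_bool (y = z) * Y z x)
        - of_real l * (\<Sum>z\<in>I. Y y z * of_bool (z = x))
        + of_real l * of_real l * (\<Sum>z\<in>I. of_bool (y = z) * of_bool (z = x))"
      unfolding mm_def Z_def by (simp add: algebra_simps sum.distrib sum_subtractf sum_distrib_left)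
    also have "\<dots> = mm I Y Y y x - 2 * of_real l * Y y x + of_real (l^2) * of_bool (y = x)"
      using that fin by (simp add: sum_delta_l sum_delta_r mm_def power2_eq_square)
    finally show ?thesis .
  qed
  have "trace_prod I \<sigma> (mm I Z Z) = trace_prod I \<sigma> (mm I Y Y) - 2 * of_real l * trace_prod I \<sigma> Y
        + of_real (l^2) * (\<Sum>x\<in>I. \<Sum>y\<in>I. \<sigma> x y * of_bool (y = x))"
    unfolding trace_prod_def
    by (simp add: mZ algebra_simps sum.distrib sum_subtractf sum_distrib_left cong: sum.cong)
  also have "(\<Sum>x\<in>I. \<Sum>y\<in>I. \<sigma> x y * of_bool (y = x)) = 1"
    using tr fin by (simp add: sum_delta_r)
  finally have "Re (trace_prod I \<sigma> (mm I Z Z)) = Re (trace_prod I \<sigma> (mm I Y Y)) - 2 * l * l + l^2"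
    by (simp add: l_def)
  moreover have "Re (trace_prod I \<sigma> (mm I Z Z)) \<ge> 0" by (rule psd_sq[OF psd hZ fin])
  ultimately show ?thesis unfolding l_def by (simp add: power2_eq_square)
qed



lemma trace_lin:
  "trace_prod I \<sigma> (\<lambda>x y. \<Sum>s\<in>S. c s * F s x y) = (\<Sum>s\<in>S. c s * trace_prod I \<sigma> (F s))"
proof -
  have "trace_prod I \<sigma> (\<lambda>x y. \<Sum>s\<in>S. c s * F s x y) = (\<Sum>x\<in>I. \<Sum>y\<in>I. \<Sum>s\<in>S. c s * (\<sigma> x y * F s y x))"
    unfolding trace_prod_def by (simp add: sum_distrib_left algebra_simps)
  also have "\<dots> = (\<Sum>x\<in>I. \<Sum>s\<in>S. \<Sum>y\<in>I. c s * (\<sigma> x y * F s y x))"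
    by (intro sum.cong refl sum.swap)
  also have "\<dots> = (\<Sum>s\<in>S. \<Sum>x\<in>I. \<Sum>y\<in>I. c s * (\<sigma> x y * F s y x))"
    by (rule sum.swap)
  also have "\<dots> = (\<Sum>s\<in>S. c s * trace_prod I \<sigma> (F s))"
    unfolding trace_prod_def by (simp add: sum_distrib_left)
  finally show ?thesis .
qed

lemma herm_tensor:
  assumes "\<forall>k<N. hermitian_on {..<d k} (B k)"
  shows "hermitian_on (mindex N d) (tensor_op N B)"
  unfolding hermitian_on_def tensor_op_def
proof (intro ballI)
  fix x y assume x: "x \<in> mindex N d" and y: "y \<in> mindex N d"
  show "(\<Prod>k<N. B k (x k) (y k)) = cnj (\<Prod>k<N. B k (y k) (x k))"
    unfolding cnj_prod
  proof (rule prod.cong[OF refl])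
    fix k assume "k \<in> {..<N}"
    then have k: "k < N" by simp
    have "x k < d k" using x k unfolding mindex_def by (simp add: PiE_iff)
    moreover have "y k < d k" using y k unfolding mindex_def by (simp add: PiE_iff)
    moreover have "hermitian_on {..<d k} (B k)" using assms k by blast
    ultimately show "B k (x k) (y k) = cnj (B k (y k) (x k))" unfolding hermitian_on_def by blast
  qed
qed

lemma herm_sum:
  assumes "\<forall>s\<in>S. hermitian_on I (F s)"
  shows "hermitian_on I (\<lambda>x y. \<Sum>s\<in>S. of_real (c s) * F s x y)"
  unfolding hermitian_on_def
proof (intro ballI)
  fix x y assume "x \<in> I" "y \<in> I"
  then show "(\<Sum>s\<in>S. of_real (c s) * F s x y) = cnj (\<Sum>s\<in>S. of_real (c s) * F s y x)"
    unfolding cnj_sum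
  proof (intro sum.cong refl)
    fix s assume "s \<in> S"
    then have "F s x y = cnj (F s y x)" using assms \<open>x \<in> I\<close> \<open>y \<in> I\<close> unfolding hermitian_on_def by blast
    then show "of_real (c s) * F s x y = cnj (of_real (c s) * F s y x)" by simp
  qed
qed

lemma mm_tensor:
  "mm (mindex N d) (tensor_op N B1) (tensor_op N B2) x y = tensor_op N (\<lambda>k a b. \<Sum>c<d k. B1 k a c * B2 k c b) x y"
proof -
  have "mm (mindex N d) (tensor_op N B1) (tensor_op N B2) x y =
        (\<Sum>z\<in>mindex N d. \<Prod>k<N. B1 k (x k) (z k) * B2 k (z k) (y k))"
    unfolding mm_def tensor_op_def by (simp add: prod.distrib)
  also have "\<dots> = (\<Prod>k<N. \<Sum>c<d k. B1 k (x k) c * B2 k c (y k))"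
    unfolding mindex_def by (rule prod_sum_PiE[symmetric]) auto
  finally show ?thesis unfolding tensor_op_def by simp
qed

lemma mm_lin:
  "mm I (\<lambda>x y. \<Sum>s\<in>S. c s * F s x y) (\<lambda>x y. \<Sum>t\<in>S. c t * F t x y) x y =
   (\<Sum>s\<in>S. \<Sum>t\<in>S. (c s * c t) * mm I (F s) (F t) x y)"
proof -
  have "mm I (\<lambda>x y. \<Sum>s\<in>S. c s * F s x y) (\<lambda>x y. \<Sum>t\<in>S. c t * F t x y) x y =
      (\<Sum>z\<in>I. \<Sum>s\<in>S. \<Sum>t\<in>S. (c s * c t) * (F s x z * F t z y))"
    unfolding mm_def sum_product by (intro sum.cong refl) (simp add: mult_ac)
  also have "\<dots> = (\<Sum>s\<in>S. \<Sum>z\<in>I. \<Sum>t\<in>S. (c s * c t) * (F s x z * F t z y))"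
    by (rule sum.swap)
  also have "\<dots> = (\<Sum>s\<in>S. \<Sum>t\<in>S. \<Sum>z\<in>I. (c s * c t) * (F s x z * F t z y))"
    by (intro sum.cong refl sum.swap)
  also have "\<dots> = (\<Sum>s\<in>S. \<Sum>t\<in>S. (c s * c t) * mm I (F s) (F t) x y)"
    unfolding mm_def by (simp add: sum_distrib_left)
  finally show ?thesis .
qed



lemma swap4: "(\<Sum>a\<in>A. \<Sum>b\<in>B. \<Sum>c\<in>C. \<Sum>e\<in>E. f a b c e) = (\<Sum>c\<in>C. \<Sum>e\<in>E. \<Sum>a\<in>A. \<Sum>b\<in>B. f a b c e)"
proof -
  have "(\<Sum>a\<in>A. \<Sum>b\<in>B. \<Sum>c\<in>C. \<Sum>e\<in>E. f a b c e) = (\<Sum>a\<in>A. \<Sum>c\<in>C. \<Sum>b\<in>B. \<Sum>e\<in>E. f a b c e)"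
    by (intro sum.cong refl sum.swap)
  also have "\<dots> = (\<Sum>c\<in>C. \<Sum>a\<in>A. \<Sum>b\<in>B. \<Sum>e\<in>E. f a b c e)" by (rule sum.swap)
  also have "\<dots> = (\<Sum>c\<in>C. \<Sum>a\<in>A. \<Sum>e\<in>E. \<Sum>b\<in>B. f a b c e)" by (intro sum.cong refl sum.swap)
  also have "\<dots> = (\<Sum>c\<in>C. \<Sum>e\<in>E. \<Sum>a\<in>A. \<Sum>b\<in>B. f a b c e)" by (intro sum.cong refl sum.swap)
  finally show ?thesis .
qed

lemma swap3: "(\<Sum>a\<in>A. \<Sum>c\<in>C. \<Sum>e\<in>E. f a c e) = (\<Sum>c\<in>C. \<Sum>e\<in>E. \<Sum>a\<in>A. f a c e)"
proof -
  have "(\<Sum>a\<in>A. \<Sum>c\<in>C. \<Sum>e\<in>E. f a c e) = (\<Sum>c\<in>C. \<Sum>a\<in>A. \<Sum>e\<in>E. f a c e)" by (rule sum.swap)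
  also have "\<dots> = (\<Sum>c\<in>C. \<Sum>e\<in>E. \<Sum>a\<in>A. f a c e)" by (intro sum.cong refl sum.swap)
  finally show ?thesis .
qed

lemma trace_lin2:
  "trace_prod I \<sigma> (\<lambda>x y. \<Sum>s\<in>S. \<Sum>t\<in>S'. c s t * F s t x y) = (\<Sum>s\<in>S. \<Sum>t\<in>S'. c s t * trace_prod I \<sigma> (F s t))"
proof -
  have "trace_prod I \<sigma> (\<lambda>x y. \<Sum>s\<in>S. \<Sum>t\<in>S'. c s t * F s t x y) =
        trace_prod I \<sigma> (\<lambda>x y. \<Sum>s\<in>S. 1 * (\<lambda>s x y. \<Sum>t\<in>S'. c s t * F s t x y) s x y)" by simp
  also have "\<dots> = (\<Sum>s\<in>S. 1 * trace_prod I \<sigma> (\<lambda>x y. \<Sum>t\<in>S'. c s t * F s t x y))"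
    by (rule trace_lin)
  also have "\<dots> = (\<Sum>s\<in>S. \<Sum>t\<in>S'. c s t * trace_prod I \<sigma> (F s t))"
    by (simp add: trace_lin)
  finally show ?thesis .
qed



definition Eop :: "nat \<Rightarrow> (nat \<Rightarrow> nat) \<Rightarrow> (nat \<Rightarrow> nat \<Rightarrow> nat \<Rightarrow> nat \<Rightarrow> complex) \<Rightarrow> ((nat \<Rightarrow> nat) \<Rightarrow> (nat \<Rightarrow> nat) \<Rightarrow> complex) \<Rightarrow> nat set \<Rightarrow> (nat \<Rightarrow> nat) \<Rightarrow> (nat \<Rightarrow> nat) \<Rightarrow> complex" where
  "Eop N d A \<rho> \<tau> s t = trace_prod (mindex N d) \<rho> (tensor_op N (\<lambda>k a b. if k \<in> \<tau> then (\<Sum>c<d k. A k (t k) a c * A k (s k) c b)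
        else (\<Sum>c<d k. A k (s k) a c * A k (t k) c b)))"

lemma step2:
  assumes np: "norm_preserving N M D T"
  shows "(\<Sum>\<tau>\<in>Pow {..<N}. \<Sum>s\<in>mindex N (\<lambda>_. M). \<Sum>t\<in>mindex N (\<lambda>_. M). of_real (Gm D T s t) * Eop N d A \<rho> \<tau> s t)
       = 2^N * (\<Sum>s\<in>mindex N (\<lambda>_. M). trace_prod (mindex N d) \<rho> (tensor_op N (\<lambda>k. mat_sq (d k) (A k (s k)))))"
proof -
  let ?X = "mindex N d"
  let ?S = "mindex N (\<lambda>_. M)"
  let ?U = "Pow {..<N}"
  define P where "P x y k j l = (\<Sum>c<d k. A k j (y k) c * A k l c (x k))" for x y :: "nat \<Rightarrow> nat" and k j l
  define K where "K x y \<tau> s t = (\<Prod>k<N. if k \<in> \<tau> then P x y k (t k) (s k) else P x y k (s k) (t k))" for x y \<tau> s t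
  have Eexp: "Eop N d A \<rho> \<tau> s t = (\<Sum>x\<in>?X. \<Sum>y\<in>?X. \<rho> x y * K x y \<tau> s t)" for \<tau> s t
    unfolding Eop_def trace_prod_def tensor_op_def K_def P_def by simp
  have Ksum: "(\<Sum>\<tau>\<in>?U. K x y \<tau> s t) = (\<Prod>k<N. P x y k (s k) (t k) + P x y k (t k) (s k))" for x y s t
    unfolding K_def by (subst prod_add_if) (simp_all add: add.commute)
  have "(\<Sum>\<tau>\<in>?U. \<Sum>s\<in>?S. \<Sum>t\<in>?S. of_real (Gm D T s t) * Eop N d A \<rho> \<tau> s t)
      = (\<Sum>s\<in>?S. \<Sum>t\<in>?S. \<Sum>\<tau>\<in>?U. of_real (Gm D T s t) * Eop N d A \<rho> \<tau> s t)"
    by (rule swap3)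
  also have "\<dots> = (\<Sum>s\<in>?S. \<Sum>t\<in>?S. of_real (Gm D T s t) * (\<Sum>x\<in>?X. \<Sum>y\<in>?X. \<rho> x y * (\<Sum>\<tau>\<in>?U. K x y \<tau> s t)))"
  proof (intro sum.cong refl)
    fix s t
    have "(\<Sum>\<tau>\<in>?U. of_real (Gm D T s t) * Eop N d A \<rho> \<tau> s t) =
          of_real (Gm D T s t) * (\<Sum>\<tau>\<in>?U. \<Sum>x\<in>?X. \<Sum>y\<in>?X. \<rho> x y * K x y \<tau> s t)"
      unfolding Eexp by (simp add: sum_distrib_left)
    also have "(\<Sum>\<tau>\<in>?U. \<Sum>x\<in>?X. \<Sum>y\<in>?X. \<rho> x y * K x y \<tau> s t) = (\<Sum>x\<in>?X. \<Sum>y\<in>?X. \<Sum>\<tau>\<in>?U. \<rho> x y * K x y \<tau> s t)"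
      by (rule swap3)
    also have "\<dots> = (\<Sum>x\<in>?X. \<Sum>y\<in>?X. \<rho> x y * (\<Sum>\<tau>\<in>?U. K x y \<tau> s t))"
      by (simp add: sum_distrib_left)
    finally show "(\<Sum>\<tau>\<in>?U. of_real (Gm D T s t) * Eop N d A \<rho> \<tau> s t) =
       of_real (Gm D T s t) * (\<Sum>x\<in>?X. \<Sum>y\<in>?X. \<rho> x y * (\<Sum>\<tau>\<in>?U. K x y \<tau> s t))" .
  qed
  also have "\<dots> = (\<Sum>s\<in>?S. \<Sum>t\<in>?S. \<Sum>x\<in>?X. \<Sum>y\<in>?X. \<rho> x y * (of_real (Gm D T s t) * 
          (\<Prod>k<N. P x y k (s k) (t k) + P x y k (t k) (s k))))"
    unfolding Ksum by (simp add: sum_distrib_left mult_ac)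
  also have "\<dots> = (\<Sum>x\<in>?X. \<Sum>y\<in>?X. \<Sum>s\<in>?S. \<Sum>t\<in>?S. \<rho> x y * (of_real (Gm D T s t) * 
          (\<Prod>k<N. P x y k (s k) (t k) + P x y k (t k) (s k))))"
    by (rule swap4)
  also have "\<dots> = (\<Sum>x\<in>?X. \<Sum>y\<in>?X. \<rho> x y * (\<Sum>s\<in>?S. \<Sum>t\<in>?S. of_real (Gm D T s t) * 
          (\<Prod>k<N. P x y k (s k) (t k) + P x y k (t k) (s k))))"
    by (simp add: sum_distrib_left)
  also have "\<dots> = (\<Sum>x\<in>?X. \<Sum>y\<in>?X. \<rho> x y * (2^N * (\<Sum>s\<in>?S. \<Prod>k<N. P x y k (s k) (s k))))"
    by (simp add: keyK[OF np])
  also have "\<dots> = (\<Sum>x\<in>?X. \<Sum>y\<in>?X. \<Sum>s\<in>?S. 2^N * (\<rho> x y * (\<Prod>k<N. P x y k (s k) (s k))))"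
    by (simp add: sum_distrib_left mult_ac)
  also have "\<dots> = (\<Sum>s\<in>?S. \<Sum>x\<in>?X. \<Sum>y\<in>?X. 2^N * (\<rho> x y * (\<Prod>k<N. P x y k (s k) (s k))))"
    by (rule swap3[symmetric])
  also have "\<dots> = 2^N * (\<Sum>s\<in>?S. trace_prod ?X \<rho> (tensor_op N (\<lambda>k. mat_sq (d k) (A k (s k)))))"
    unfolding trace_prod_def tensor_op_def mat_sq_def P_def by (simp add: sum_distrib_left)
  finally show ?thesis .
qed



lemma step1:
  assumes dens: "density_on (mindex N d) \<rho>"
    and psd: "psd_on (mindex N d) (partial_transpose \<tau> \<rho>)"
    and herm: "\<forall>k<N. \<forall>j<M. hermitian_on {..<d k} (A k j)"
  shows "(\<Sum>i<D. (\<Sum>s\<in>mindex N (\<lambda>_. M). T i s * Re (trace_prod (mindex N d) \<rho> (tensor_op N (\<lambda>k. A k (s k)))))\<^sup>2)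
      \<le> Re (\<Sum>s\<in>mindex N (\<lambda>_. M). \<Sum>t\<in>mindex N (\<lambda>_. M). of_real (Gm D T s t) * Eop N d A \<rho> \<tau> s t)"
proof -
  let ?X = "mindex N d"
  let ?S = "mindex N (\<lambda>_. M)"
  let ?\<sigma> = "partial_transpose \<tau> \<rho>"
  define Bt where "Bt s k a b = (if k \<in> \<tau> then A k (s k) b a else A k (s k) a b)" for s :: "nat \<Rightarrow> nat" and k a b
  define Y where "Y i = (\<lambda>x y. \<Sum>s\<in>?S. of_real (T i s) * tensor_op N (Bt s) x y)" for i
  have fin: "finite ?X" by simp
  have tr: "(\<Sum>x\<in>?X. ?\<sigma> x x) = 1" using dens unfolding density_on_def trace_pt_diag by simp
  have hB: "hermitian_on ?X (tensor_op N (Bt s))" if s: "s \<in> ?S" for s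
  proof (rule herm_tensor, intro allI impI)
    fix k assume k: "k < N"
    then have "s k < M" using s unfolding mindex_def by (simp add: PiE_iff)
    then have hA: "hermitian_on {..<d k} (A k (s k))" using herm k by blast
    show "hermitian_on {..<d k} (Bt s k)" unfolding hermitian_on_def
    proof (intro ballI)
      fix a b assume "a \<in> {..<d k}" "b \<in> {..<d k}"
      then have "A k (s k) a b = cnj (A k (s k) b a)" "A k (s k) b a = cnj (A k (s k) a b)"
        using hA unfolding hermitian_on_def by blast+
      then show "Bt s k a b = cnj (Bt s k b a)" unfolding Bt_def by simp
    qed
  qed
  have hY: "hermitian_on ?X (Y i)" for i
    unfolding Y_def by (rule herm_sum) (use hB in blast)
  have a1: "trace_prod ?X ?\<sigma> (tensor_op N (Bt s)) = trace_prod ?X \<rho> (tensor_op N (\<lambda>k. A k (s k)))" for s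
  proof -
    have "tensor_op N (\<lambda>k a b. if k \<in> \<tau> then Bt s k b a else Bt s k a b) = tensor_op N (\<lambda>k. A k (s k))"
      unfolding Bt_def by (intro arg_cong[where f="tensor_op N"] ext) simp
    then show ?thesis by (simp add: trace_pt)
  qed
  have a2: "Re (trace_prod ?X ?\<sigma> (Y i)) = (\<Sum>s\<in>?S. T i s * Re (trace_prod ?X \<rho> (tensor_op N (\<lambda>k. A k (s k)))))" for i
    unfolding Y_def trace_lin a1 by simp
  have a3: "trace_prod ?X ?\<sigma> (mm ?X (Y i) (Y i)) = (\<Sum>s\<in>?S. \<Sum>t\<in>?S. of_real (T i s * T i t) * Eop N d A \<rho> \<tau> s t)" for i
  proof -
    have "mm ?X (Y i) (Y i) = (\<lambda>x y. \<Sum>s\<in>?S. \<Sum>t\<in>?S. of_real (T i s * T i t) *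
             tensor_op N (\<lambda>k a b. \<Sum>c<d k. Bt s k a c * Bt t k c b) x y)"
      unfolding Y_def by (intro ext) (simp add: mm_lin mm_tensor)
    then have "trace_prod ?X ?\<sigma> (mm ?X (Y i) (Y i)) = (\<Sum>s\<in>?S. \<Sum>t\<in>?S. of_real (T i s * T i t) *
             trace_prod ?X ?\<sigma> (tensor_op N (\<lambda>k a b. \<Sum>c<d k. Bt s k a c * Bt t k c b)))"
      by (simp add: trace_lin2)
    also have "\<dots> = (\<Sum>s\<in>?S. \<Sum>t\<in>?S. of_real (T i s * T i t) * Eop N d A \<rho> \<tau> s t)"
    proof (intro sum.cong refl arg_cong2[where f="(*)"])
      fix s t
      have "tensor_op N (\<lambda>k a b. if k \<in> \<tau> then (\<Sum>c<d k. Bt s k b c * Bt t k c a) else (\<Sum>c<d k. Bt s k a c * Bt t k c b))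
          = tensor_op N (\<lambda>k a b. if k \<in> \<tau> then (\<Sum>c<d k. A k (t k) a c * A k (s k) c b)
              else (\<Sum>c<d k. A k (s k) a c * A k (t k) c b))"
        unfolding Bt_def by (intro arg_cong[where f="tensor_op N"] ext) (simp add: mult.commute)
      then show "trace_prod ?X ?\<sigma> (tensor_op N (\<lambda>k a b. \<Sum>c<d k. Bt s k a c * Bt t k c b)) = Eop N d A \<rho> \<tau> s t"
        unfolding Eop_def by (simp add: trace_pt)
    qed
    finally show ?thesis .
  qed
  have "(\<Sum>i<D. (\<Sum>s\<in>?S. T i s * Re (trace_prod ?X \<rho> (tensor_op N (\<lambda>k. A k (s k)))))\<^sup>2)
      = (\<Sum>i<D. (Re (trace_prod ?X ?\<sigma> (Y i)))\<^sup>2)" by (simp add: a2)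
  also have "\<dots> \<le> (\<Sum>i<D. Re (trace_prod ?X ?\<sigma> (mm ?X (Y i) (Y i))))"
    by (rule sum_mono) (rule cs[OF psd tr hY fin])
  also have "\<dots> = Re (\<Sum>i<D. \<Sum>s\<in>?S. \<Sum>t\<in>?S. of_real (T i s * T i t) * Eop N d A \<rho> \<tau> s t)"
    by (simp add: a3)
  also have "(\<Sum>i<D. \<Sum>s\<in>?S. \<Sum>t\<in>?S. of_real (T i s * T i t) * Eop N d A \<rho> \<tau> s t)
      = (\<Sum>s\<in>?S. \<Sum>t\<in>?S. \<Sum>i<D. of_real (T i s * T i t) * Eop N d A \<rho> \<tau> s t)"
    by (rule swap3)
  also have "\<dots> = (\<Sum>s\<in>?S. \<Sum>t\<in>?S. of_real (Gm D T s t) * Eop N d A \<rho> \<tau> s t)"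
    unfolding Gm_def of_real_sum sum_distrib_right by simp
  finally show ?thesis .
qed



theorem proposition2:
  fixes N M D :: nat
    and d :: "nat \<Rightarrow> nat"
    and T :: "nat \<Rightarrow> (nat \<Rightarrow> nat) \<Rightarrow> real"
    and \<rho> :: "(nat \<Rightarrow> nat) \<Rightarrow> (nat \<Rightarrow> nat) \<Rightarrow> complex"
    and A :: "nat \<Rightarrow> nat \<Rightarrow> nat \<Rightarrow> nat \<Rightarrow> complex"
  assumes "norm_preserving N M D T"
    and "density_on (mindex N d) \<rho>"
    and "\<forall>\<tau>. \<tau> \<subseteq> {..<N} \<longrightarrow> psd_on (mindex N d) (partial_transpose \<tau> \<rho>)"
    and "\<forall>k<N. \<forall>j<M. hermitian_on {..<d k} (A k j)"
  shows "(\<Sum>i<D. (\<Sum>s\<in>mindex N (\<lambda>_. M).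
             T i s * Re (trace_prod (mindex N d) \<rho> (tensor_op N (\<lambda>k. A k (s k)))))\<^sup>2)
         \<le> (\<Sum>s\<in>mindex N (\<lambda>_. M).
             Re (trace_prod (mindex N d) \<rho> (tensor_op N (\<lambda>k. mat_sq (d k) (A k (s k))))))"
proof -
  let ?S = "mindex N (\<lambda>_. M)"
  define L where "L = (\<Sum>i<D. (\<Sum>s\<in>?S.
             T i s * Re (trace_prod (mindex N d) \<rho> (tensor_op N (\<lambda>k. A k (s k)))))\<^sup>2)"
  define Q where "Q \<tau> = (\<Sum>s\<in>?S. \<Sum>t\<in>?S. of_real (Gm D T s t) * Eop N d A \<rho> \<tau> s t)" for \<tau>
  define R where "R = (\<Sum>s\<in>?S. trace_prod (mindex N d) \<rho> (tensor_op N (\<lambda>k. mat_sq (d k) (A k (s k)))))"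
  have "L \<le> Re (Q \<tau>)" if "\<tau> \<in> Pow {..<N}" for \<tau>
    unfolding L_def Q_def
    by (rule step1[OF assms(2) _ assms(4)]) (use assms(3) that in blast)
  then have "(\<Sum>\<tau>\<in>Pow {..<N}. L) \<le> (\<Sum>\<tau>\<in>Pow {..<N}. Re (Q \<tau>))" by (rule sum_mono)
  also have "\<dots> = Re (\<Sum>\<tau>\<in>Pow {..<N}. Q \<tau>)" by simp
  also have "(\<Sum>\<tau>\<in>Pow {..<N}. Q \<tau>) = 2^N * R"
    unfolding Q_def R_def by (rule step2[OF assms(1)])
  finally have "2^N * L \<le> 2^N * Re R" by (simp add: card_Pow)
  then have "L \<le> Re R" by simp
  then show ?thesis unfolding L_def R_def by simp
qed


end
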